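(* Let $A\in\mathbb{R}^{n\times n}$ be Hurwitz, $B\in\mathbb{R}^{n\times m}$, $C\in\mathbb{R}^{m\times n}$, $D\in\mathbb{R}^{m\times m}$ with $\|D\|<1$, and let $\Sigma$ be the system $\dot{\mathbf{x}}(t)=A\mathbf{x}(t)+B\,\Phi\circ(I-D\Phi)^{-1}(C\mathbf{x}(t))$. Primal LMI: find a positive definite $P\in\mathbb{S}^n$ and $\Pi\in\boldsymbol{\Pi}_{\mathcal{NN}}$ such that $$\begin{bmatrix} PA+A^TP & PB\\ B^TP & 0\end{bmatrix}+\begin{bmatrix} C & D\\ 0 & I_m\end{bmatrix}^T\Pi\begin{bmatrix} C & D\\ 0 & I_m\end{bmatrix}\prec 0.$$ Dual LMI: find a nonzero positive semidefinite $H=\begin{bmatrix}H_{11}&H_{12}\\H_{12}^T&H_{22}\end{bmatrix}\in\mathbb{S}^{n+m}$ (with $H_{11}\in\mathbb{S}^n$, $H_{22}\in\mathbb{S}^m$) such that $$AH_{11}+BH_{12}^T+(AH_{11}+BH_{12}^T)^T\succeq 0,$$ $$\begin{bmatrix}-C & I_m-D\\ 0 & I_m\end{bmatrix}H\begin{bmatrix}-C & I_m-D\\ 0 & I_m\end{bmatrix}^T\ \text{is entrywise nonnegative},$$ $$\mathrm{diag}\big(-CH_{12}+(I_m-D)H_{22}\big)=0.$$ Then $\Sigma$ is globally asymptotically stable if the primal LMI is feasible. Moreover, the primal LMI is infeasible if and only if the dual LMI is feasible.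
   Context: $\|D\|$ is the spectral norm; $\Phi$ is the componentwise ReLU $\Phi(q)_i=\max(q_i,0)$; $(I-D\Phi)^{-1}$ is the inverse of the bijection $q\mapsto q-D\Phi(q)$ of $\mathbb{R}^m$ (well defined when $\|D\|<1$). Global asymptotic stability of the origin means: for each $\varepsilon>0$ there is $\delta>0$ with $\|\mathbf{x}(0)\|<\delta\Rightarrow\|\mathbf{x}(t)\|<\varepsilon$ for all $t\ge 0$, and $\lim_{t\to\infty}\mathbf{x}(t)=0$ for every initial state. $\mathbb{S}^k$ is the set of real symmetric $k\times k$ matrices; $\mathrm{diag}(M)$ is the vector of diagonal entries of a square matrix $M$. $\mathcal{NN}^{2m}$ is the set of symmetric $2m\times 2m$ matrices with all entries nonnegative. $\boldsymbol{\Pi}_{\mathcal{NN}}:=\{E^T(Q+\mathcal{J}(J))E:\ J\in\mathbb{R}^{m\times m}\text{ diagonal},\ Q\in\mathcal{NN}^{2m}\}$, where $E=\begin{bmatrix}-I_m & I_m\\ 0 & I_m\end{bmatrix}$ and $\mathcal{J}(J)=\begin{bmatrix}0 & J\\ J & 0\end{bmatrix}$. *)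

theory Defs
  imports "HOL-Analysis.Analysis"
begin

text \<open>Matrices are HOL-Analysis Cartesian matrices: a p x q real matrix is of type
  real^'q^'p (rows indexed by 'p). Block indices use sum types: 'a::finite + 'b.\<close>

definition block ::
  "real^'c^'a \<Rightarrow> real^'d^'a \<Rightarrow> real^'c^'b \<Rightarrow> real^'d^'b \<Rightarrow> real^('c::finite + 'd::finite)^('a::finite + 'b::finite)" where
  "block X Y Z W = (\<chi> i j. (case i of
       Inl a \<Rightarrow> (case j of Inl c \<Rightarrow> X $ a $ c | Inr d \<Rightarrow> Y $ a $ d)
     | Inr b \<Rightarrow> (case j of Inl c \<Rightarrow> Z $ b $ c | Inr d \<Rightarrow> W $ b $ d)))"

definition blk11 :: "real^('c::finite + 'd::finite)^('a::finite + 'b::finite) \<Rightarrow> real^'c^'a" where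
  "blk11 H = (\<chi> i j. H $ Inl i $ Inl j)"
definition blk12 :: "real^('c::finite + 'd::finite)^('a::finite + 'b::finite) \<Rightarrow> real^'d^'a" where
  "blk12 H = (\<chi> i j. H $ Inl i $ Inr j)"
definition blk22 :: "real^('c::finite + 'd::finite)^('a::finite + 'b::finite) \<Rightarrow> real^'d^'b" where
  "blk22 H = (\<chi> i j. H $ Inr i $ Inr j)"

definition symmetric_mat :: "real^'n^'n \<Rightarrow> bool" where
  "symmetric_mat M \<longleftrightarrow> transpose M = M"

definition pos_def :: "real^'n^'n \<Rightarrow> bool" where
  "pos_def M \<longleftrightarrow> symmetric_mat M \<and> (\<forall>x. x \<noteq> 0 \<longrightarrow> x \<bullet> (M *v x) > 0)"

definition neg_def :: "real^'n^'n \<Rightarrow> bool" where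
  "neg_def M \<longleftrightarrow> symmetric_mat M \<and> (\<forall>x. x \<noteq> 0 \<longrightarrow> x \<bullet> (M *v x) < 0)"

definition pos_semidef :: "real^'n^'n \<Rightarrow> bool" where
  "pos_semidef M \<longleftrightarrow> symmetric_mat M \<and> (\<forall>x. x \<bullet> (M *v x) \<ge> 0)"

definition entrywise_nonneg :: "real^'c^'a \<Rightarrow> bool" where
  "entrywise_nonneg M \<longleftrightarrow> (\<forall>i j. M $ i $ j \<ge> 0)"

definition diagonal_mat :: "real^'n^'n \<Rightarrow> bool" where
  "diagonal_mat J \<longleftrightarrow> (\<forall>i j. i \<noteq> j \<longrightarrow> J $ i $ j = 0)"

definition hurwitz :: "real^'n^'n \<Rightarrow> bool" where
  "hurwitz A \<longleftrightarrow> (\<forall>(lam::complex) (v::complex^'n). v \<noteq> 0 \<and>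
      (\<chi> i j. complex_of_real (A $ i $ j)) *v v = lam *s v \<longrightarrow> Re lam < 0)"

definition spec_norm :: "real^'m^'k \<Rightarrow> real" where
  "spec_norm D = onorm (\<lambda>x. D *v x)"

definition relu :: "real^'m \<Rightarrow> real^'m" where
  "relu q = (\<chi> i. max (q $ i) 0)"

definition inv_IDPhi :: "real^'m^'m \<Rightarrow> real^'m \<Rightarrow> real^'m" where
  "inv_IDPhi D = inv (\<lambda>q. q - D *v relu q)"

definition nonlin :: "real^'m^'m \<Rightarrow> real^'m \<Rightarrow> real^'m" where
  "nonlin D q = relu (inv_IDPhi D q)"

definition is_solution ::
  "real^'n^'n \<Rightarrow> real^'m^'n \<Rightarrow> real^'n^'m \<Rightarrow> real^'m^'m \<Rightarrow> (real \<Rightarrow> real^'n) \<Rightarrow> bool" where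
  "is_solution A B C D x \<longleftrightarrow> (\<forall>t\<ge>0.
      (x has_vector_derivative (A *v x t + B *v nonlin D (C *v x t))) (at t within {0..}))"

definition globally_asymptotically_stable ::
  "real^'n^'n \<Rightarrow> real^'m^'n \<Rightarrow> real^'n^'m \<Rightarrow> real^'m^'m \<Rightarrow> bool" where
  "globally_asymptotically_stable A B C D \<longleftrightarrow>
     (\<forall>\<epsilon>>0. \<exists>\<delta>>0. \<forall>x. is_solution A B C D x \<and> norm (x 0) < \<delta> \<longrightarrow> (\<forall>t\<ge>0. norm (x t) < \<epsilon>))
   \<and> (\<forall>x. is_solution A B C D x \<longrightarrow> (x \<longlongrightarrow> 0) at_top)"

definition E_mat :: "real^('m::finite + 'm)^('m + 'm)" where
  "E_mat = block (- mat 1) (mat 1) 0 (mat 1)"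

definition Jblk :: "real^'m::finite^'m \<Rightarrow> real^('m::finite + 'm)^('m + 'm)" where
  "Jblk (J::real^'m::finite^'m) = block 0 J J 0"

definition Pi_NN :: "(real^('m::finite + 'm)^('m + 'm)) set" where
  "Pi_NN = {transpose E_mat ** (Q + Jblk J) ** E_mat | J Q.
              diagonal_mat J \<and> symmetric_mat Q \<and> entrywise_nonneg Q}"

definition primal_LMI_feasible ::
  "real^'n^'n \<Rightarrow> real^'m^'n \<Rightarrow> real^'n^'m \<Rightarrow> real^'m^'m \<Rightarrow> bool" where
  "primal_LMI_feasible A B C D \<longleftrightarrow> (\<exists>P Pi. pos_def P \<and> Pi \<in> Pi_NN \<and>
     neg_def (block (P ** A + transpose A ** P) (P ** B) (transpose B ** P) 0
              + transpose (block C D 0 (mat 1)) ** Pi ** block C D 0 (mat 1)))"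

definition dual_LMI_feasible ::
  "real^'n^'n \<Rightarrow> real^'m^'n \<Rightarrow> real^'n^'m \<Rightarrow> real^'m^'m \<Rightarrow> bool" where
  "dual_LMI_feasible A B C D \<longleftrightarrow> (\<exists>H :: real^('n::finite + 'm::finite)^('n + 'm).
     H \<noteq> 0 \<and> pos_semidef H \<and>
     pos_semidef (A ** blk11 H + B ** transpose (blk12 H)
                  + transpose (A ** blk11 H + B ** transpose (blk12 H))) \<and>
     entrywise_nonneg (block (- C) (mat 1 - D) 0 (mat 1) ** H
                       ** transpose (block (- C) (mat 1 - D) 0 (mat 1))) \<and>
     (\<forall>i. (- (C ** blk12 H) + (mat 1 - D) ** blk22 H) $ i $ i = 0))"

end

theory Submission
  imports Defs "HOL-Real_Asymp.Real_Asymp"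
begin

lemma sum_UNIV_plus:
  "(\<Sum>i\<in>(UNIV::('a::finite + 'b::finite) set). f i) = (\<Sum>a\<in>UNIV. f (Inl a)) + (\<Sum>b\<in>UNIV. f (Inr b))"
proof -
  have "(\<Sum>i\<in>(UNIV::('a + 'b) set). f i) = sum f (Inl ` UNIV \<union> Inr ` UNIV)"
    by (simp add: UNIV_sum[symmetric])
  also have "\<dots> = sum f (Inl ` UNIV) + sum f (Inr ` UNIV)"
    by (rule sum.union_disjoint) auto
  also have "\<dots> = (\<Sum>a\<in>UNIV. f (Inl a)) + (\<Sum>b\<in>UNIV. f (Inr b))"
    by (simp add: sum.reindex)
  finally show ?thesis .
qed

definition join :: "real^'a::finite \<Rightarrow> real^'b::finite \<Rightarrow> real^('a + 'b)" where
  "join u v = (\<chi> i. case i of Inl a \<Rightarrow> u $ a | Inr b \<Rightarrow> v $ b)"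

lemma join_Inl[simp]: "join u v $ Inl a = u $ a" and join_Inr[simp]: "join u v $ Inr b = v $ b"
  by (simp_all add: join_def)

lemma block_mult_join:
  "block X Y Z W *v join u v = join (X *v u + Y *v v) (Z *v u + W *v v)"
  by (simp add: vec_eq_iff join_def block_def matrix_vector_mult_def sum_UNIV_plus split: sum.splits)

lemma inner_join: "join a b \<bullet> join c d = a \<bullet> c + b \<bullet> d"
  by (simp add: inner_vec_def sum_UNIV_plus)

lemma norm_join_sq: "norm (join a b)^2 = norm a ^2 + norm b^2"
  by (simp add: power2_norm_eq_inner inner_join)

lemma block_Inl_Inl[simp]: "block X Y Z W $ Inl a $ Inl c = X $ a $ c"
  and block_Inl_Inr[simp]: "block X Y Z W $ Inl a $ Inr d = Y $ a $ d"
  and block_Inr_Inl[simp]: "block X Y Z W $ Inr b $ Inl c = Z $ b $ c"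
  and block_Inr_Inr[simp]: "block X Y Z W $ Inr b $ Inr d = W $ b $ d"
  by (simp_all add: block_def)

lemma transpose_block:
  "transpose (block X Y Z W) = block (transpose X) (transpose Z) (transpose Y) (transpose W)"
  by (simp add: vec_eq_iff transpose_def block_def split: sum.splits)

lemma block_mult:
  "block X Y Z W ** block X' Y' Z' W' = block (X ** X' + Y ** Z') (X ** Y' + Y ** W') (Z ** X' + W ** Z') (Z ** Y' + W ** W')"
  by (simp add: vec_eq_iff block_def matrix_matrix_mult_def sum_UNIV_plus split: sum.splits)

lemma block_add:
  "block X Y Z W + block X' Y' Z' W' = block (X + X') (Y + Y') (Z + Z') (W + W')"
  by (simp add: vec_eq_iff block_def split: sum.splits)

lemma block_scaleR:
  "c *\<^sub>R block X Y Z W = block (c *\<^sub>R X) (c *\<^sub>R Y) (c *\<^sub>R Z) (c *\<^sub>R W)"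
  by (simp add: vec_eq_iff block_def split: sum.splits)

definition blk21 :: "real^('c::finite + 'd::finite)^('a::finite + 'b::finite) \<Rightarrow> real^'c^'b" where
  "blk21 H = (\<chi> i j. H $ Inr i $ Inl j)"

lemma block_blks: "H = block (blk11 H) (blk12 H) (blk21 H) (blk22 H)"
  by (simp add: vec_eq_iff block_def blk11_def blk12_def blk21_def blk22_def split: sum.splits)

lemma blk_block[simp]: "blk11 (block X Y Z W) = X" "blk12 (block X Y Z W) = Y"
   "blk21 (block X Y Z W) = Z" "blk22 (block X Y Z W) = W"
  by (simp_all add: vec_eq_iff blk11_def blk12_def blk21_def blk22_def)

lemma inner_mat: "(X::real^'c::finite^'a::finite) \<bullet> Y = (\<Sum>i\<in>UNIV. \<Sum>j\<in>UNIV. X$i$j * Y$i$j)"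
  by (simp add: inner_vec_def)

lemma inner_transpose: "transpose X \<bullet> transpose (Y::real^'c::finite^'a::finite) = X \<bullet> Y"
  unfolding inner_mat transpose_def by simp (subst sum.swap, simp)

lemma inner_mmul_right: "(X::real^'c::finite^'a::finite) \<bullet> (Y ** (B::real^'c^'b::finite)) = (X ** transpose B) \<bullet> Y"
  unfolding inner_mat transpose_def matrix_matrix_mult_def
  apply (simp add: sum_distrib_left sum_distrib_right)
  apply (rule sum.cong[OF refl])
  apply (subst sum.swap)
  apply (simp add: ac_simps)
  done

lemma inner_mmul_left: "(X::real^'c::finite^'a::finite) \<bullet> ((A::real^'b::finite^'a) ** Y) = (transpose A ** X) \<bullet> Y"
proof -
  have "X \<bullet> (A ** Y) = transpose X \<bullet> transpose (A ** Y)" by (rule inner_transpose[symmetric])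
  also have "\<dots> = transpose X \<bullet> (transpose Y ** transpose A)" by (simp only: matrix_transpose_mul)
  also have "\<dots> = (transpose X ** A) \<bullet> transpose Y" by (simp only: inner_mmul_right transpose_transpose)
  also have "\<dots> = transpose (transpose A ** X) \<bullet> transpose Y" by (simp only: matrix_transpose_mul transpose_transpose)
  also have "\<dots> = (transpose A ** X) \<bullet> Y" by (rule inner_transpose)
  finally show ?thesis .
qed

definition outer :: "real^'a::finite \<Rightarrow> real^'a^'a" where
  "outer v = (\<chi> i j. v$i * v$j)"

lemma inner_outer: "(Y::real^'a::finite^'a) \<bullet> outer v = v \<bullet> (Y *v v)"
  unfolding inner_mat outer_def inner_vec_def matrix_vector_mult_def
  by (simp add: sum_distrib_left ac_simps)

lemma quad_scaleR: "(c *\<^sub>R x) \<bullet> ((P::real^'n::finite^'n) *v (c *\<^sub>R x)) = c^2 * (x \<bullet> (P *v x))"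
  by (simp add: matrix_vector_mult_scaleR power2_eq_square)

lemma quad_uniform:
  fixes P :: "real^'n::finite^'n"
  assumes pos: "\<And>x. x \<noteq> 0 \<Longrightarrow> x \<bullet> (P *v x) > 0"
  shows "\<exists>e>0. \<forall>x. e * norm x ^ 2 \<le> x \<bullet> (P *v x)"
proof -
  let ?S = "sphere (0::real^'n) 1"
  obtain i :: 'n where True by blast
  have ne: "?S \<noteq> {}" using norm_axis_1[of i] by (metis mem_sphere_0 empty_iff)
  have cont: "continuous_on ?S (\<lambda>x. x \<bullet> (P *v x))"
    by (intro continuous_intros)
  obtain x0 where x0: "x0 \<in> ?S" "\<And>y. y \<in> ?S \<Longrightarrow> x0 \<bullet> (P *v x0) \<le> y \<bullet> (P *v y)"
    using continuous_attains_inf[OF compact_sphere ne cont] by blast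
  have "x0 \<noteq> 0" using x0(1) by auto
  hence epos: "x0 \<bullet> (P *v x0) > 0" by (rule pos)
  show ?thesis
  proof (intro exI[of _ "x0 \<bullet> (P *v x0)"] conjI allI epos)
    fix x :: "real^'n"
    show "x0 \<bullet> (P *v x0) * norm x ^ 2 \<le> x \<bullet> (P *v x)"
    proof (cases "x = 0")
      case True thus ?thesis by simp
    next
      case False
      let ?u = "(1 / norm x) *\<^sub>R x"
      have u: "?u \<in> ?S" using False by simp
      have xeq: "x = norm x *\<^sub>R ?u" using False by simp
      have eq: "x \<bullet> (P *v x) = norm x ^ 2 * (?u \<bullet> (P *v ?u))"
        by (subst (1 2) xeq, rule quad_scaleR)
      have le: "norm x ^ 2 * (x0 \<bullet> (P *v x0)) \<le> norm x ^ 2 * (?u \<bullet> (P *v ?u))"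
        by (rule mult_left_mono[OF x0(2)[OF u]]) simp
      show ?thesis unfolding eq using le by (simp only: mult.commute)
    qed
  qed
qed

lemma quad_upper:
  fixes P :: "real^'n::finite^'n"
  shows "\<exists>K>0. \<forall>x. \<bar>x \<bullet> (P *v x)\<bar> \<le> K * norm x ^ 2"
proof (intro exI[of _ "onorm ((*v) P) + 1"] conjI allI)
  have o: "0 \<le> onorm ((*v) P)" by (rule onorm_pos_le) simp
  thus "0 < onorm ((*v) P) + 1" by simp
  fix x :: "real^'n"
  have "\<bar>x \<bullet> (P *v x)\<bar> \<le> norm x * norm (P *v x)" by (rule Cauchy_Schwarz_ineq2)
  also have "\<dots> \<le> norm x * (onorm ((*v) P) * norm x)"
    by (rule mult_left_mono[OF onorm]) simp_all
  also have "\<dots> \<le> (onorm ((*v) P) + 1) * norm x ^ 2"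
    by (simp add: power2_eq_square algebra_simps)
  finally show "\<bar>x \<bullet> (P *v x)\<bar> \<le> (onorm ((*v) P) + 1) * norm x ^ 2" .
qed

lemma axis_inner1: "axis i 1 \<bullet> (v::real^'n::finite) = v $ i"
  by (simp add: inner_axis')

lemma mult_axis_comp: "((P::real^'n::finite^'m::finite) *v axis j 1) $ i = P $ i $ j"
proof -
  have "((P::real^'n::finite^'m::finite) *v axis j 1) $ i = (\<Sum>l\<in>UNIV. P$i$l * (if l = j then 1 else 0))"
    by (simp add: matrix_vector_mult_def axis_def)
  also have "\<dots> = P$i$j" by (simp add: if_distrib cong: if_cong)
  finally show ?thesis .
qed

lemma axis_quad: "axis i 1 \<bullet> ((P::real^'n::finite^'n) *v axis j 1) = P $ i $ j"
  by (simp add: axis_inner1 mult_axis_comp)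

lemma quad_expand:
  fixes P :: "real^'n::finite^'n"
  shows "(a + b) \<bullet> (P *v (a + b)) = a \<bullet> (P *v a) + a \<bullet> (P *v b) + b \<bullet> (P *v a) + b \<bullet> (P *v b)"
  by (simp add: matrix_vector_right_distrib inner_add_left inner_add_right)

lemma quad_expand_diff:
  fixes P :: "real^'n::finite^'n"
  shows "(a - b) \<bullet> (P *v (a - b)) = a \<bullet> (P *v a) - a \<bullet> (P *v b) - b \<bullet> (P *v a) + b \<bullet> (P *v b)"
  by (simp add: matrix_vector_mult_diff_distrib inner_diff_left inner_diff_right)

lemma quad_outer: "x \<bullet> (outer p *v x) = (p \<bullet> x)^2"
  unfolding outer_def inner_vec_def matrix_vector_mult_def power2_eq_square
  by (simp add: sum_distrib_left sum_distrib_right ac_simps)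

lemma outer_scaleR: "outer (c *\<^sub>R p) = c^2 *\<^sub>R outer p"
  by (simp add: outer_def vec_eq_iff power2_eq_square)

lemma psd_decomp_aux:
  fixes I :: "'n::finite set"
  assumes "finite I"
  shows "\<forall>P::real^'n^'n. symmetric_mat P \<and> (\<forall>x. 0 \<le> x \<bullet> (P *v x)) \<and> (\<forall>i j. P$i$j \<noteq> 0 \<longrightarrow> i \<in> I)
           \<longrightarrow> (\<exists>vs. P = sum_list (map outer vs))"
  using assms
proof (induction I rule: finite_induct)
  case empty
  show ?case
  proof (intro allI impI)
    fix P :: "real^'n^'n" assume "symmetric_mat P \<and> (\<forall>x. 0 \<le> x \<bullet> (P *v x)) \<and> (\<forall>i j. P$i$j \<noteq> 0 \<longrightarrow> i \<in> {})"
    hence "P = 0" by (auto simp: vec_eq_iff)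
    thus "\<exists>vs. P = sum_list (map outer vs)" by (intro exI[of _ "[]"]) simp
  qed
next
  case (insert k I)
  show ?case
  proof (intro allI impI)
    fix P :: "real^'n^'n"
    assume H: "symmetric_mat P \<and> (\<forall>x. 0 \<le> x \<bullet> (P *v x)) \<and> (\<forall>i j. P$i$j \<noteq> 0 \<longrightarrow> i \<in> insert k I)"
    have sym: "\<And>i j. P$i$j = P$j$i" using H unfolding symmetric_mat_def
      by (metis transpose_def vec_lambda_beta)
    have psd: "\<And>x. 0 \<le> x \<bullet> (P *v x)" using H by blast
    have supp: "\<And>i j. P$i$j \<noteq> 0 \<Longrightarrow> i \<in> insert k I" using H by blast
    have kk: "P$k$k \<ge> 0" using psd[of "axis k 1"] by (simp add: axis_quad)
    show "\<exists>vs. P = sum_list (map outer vs)"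
    proof (cases "P$k$k = 0")
      case True
      have row0: "P$k$j = 0" for j
      proof (cases "j = k")
        case True thus ?thesis using \<open>P$k$k = 0\<close> by simp
      next
        case False
        show ?thesis
        proof (rule ccontr)
          assume ne: "P$k$j \<noteq> 0"
          define s where "s = - (P$j$j + 1) / (2 * P$k$j)"
          have "(s *\<^sub>R axis k 1 + axis j 1) \<bullet> (P *v (s *\<^sub>R axis k 1 + axis j 1))
                = s^2 * P$k$k + s * P$k$j + s * P$j$k + P$j$j"
            by (simp add: quad_expand matrix_vector_mult_scaleR axis_quad power2_eq_square)
          also have "\<dots> = 2 * s * P$k$j + P$j$j" using True sym[of j k] by simp
          also have "\<dots> = -1" using ne by (simp add: s_def field_simps)
          finally show False using psd[of "s *\<^sub>R axis k 1 + axis j 1"] by simp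
        qed
      qed
      have "\<forall>i j. P$i$j \<noteq> 0 \<longrightarrow> i \<in> I"
      proof (intro allI impI)
        fix i j assume "P$i$j \<noteq> 0"
        moreover hence "i \<noteq> k" using row0 by auto
        ultimately show "i \<in> I" using supp by blast
      qed
      thus ?thesis using insert.IH H by blast
    next
      case False
      hence kpos: "P$k$k > 0" using kk by simp
      define p where "p = (\<chi> i. P$i$k)"
      define P' where "P' = P - (1 / P$k$k) *\<^sub>R outer p"
      have symP': "symmetric_mat P'"
        using sym by (simp add: symmetric_mat_def P'_def transpose_def outer_def vec_eq_iff mult.commute)
      have psdP': "0 \<le> x \<bullet> (P' *v x)" for x
      proof -
        define s where "s = (p \<bullet> x) / P$k$k"
        have e1: "x \<bullet> (P *v axis k 1) = p \<bullet> x"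
          by (simp add: p_def inner_vec_def matrix_vector_mult_def axis_def if_distrib mult.commute cong: if_cong)
        have e2: "axis k 1 \<bullet> (P *v x) = p \<bullet> x"
          by (simp only: axis_inner1) (simp add: p_def inner_vec_def matrix_vector_mult_def sym mult.commute)
        have "(x - s *\<^sub>R axis k 1) \<bullet> (P *v (x - s *\<^sub>R axis k 1))
              = x \<bullet> (P *v x) - 2 * s * (p \<bullet> x) + s^2 * P$k$k"
          by (simp only: quad_expand_diff) (simp add: matrix_vector_mult_scaleR axis_quad e1 e2 power2_eq_square)
        also have "\<dots> = x \<bullet> (P *v x) - (p \<bullet> x)^2 / P$k$k"
          using kpos by (simp add: s_def field_simps power2_eq_square)
        also have "\<dots> = x \<bullet> (P' *v x)"
          by (simp add: P'_def matrix_vector_mult_diff_rdistrib inner_diff_right quad_outer scaleR_matrix_vector_assoc[symmetric])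
        finally show ?thesis using psd[of "x - s *\<^sub>R axis k 1"] by simp
      qed
      have suppP': "\<forall>i j. P'$i$j \<noteq> 0 \<longrightarrow> i \<in> I"
      proof (intro allI impI)
        fix i j assume ne: "P'$i$j \<noteq> 0"
        have P'ij: "P'$i$j = P$i$j - P$i$k * P$j$k / P$k$k"
          by (simp add: P'_def outer_def p_def)
        show "i \<in> I"
        proof (rule ccontr)
          assume "i \<notin> I"
          show False
          proof (cases "i = k")
            case True
            thus False using ne P'ij kpos sym[of k j] by simp
          next
            case False
            hence "P$i$j = 0" "P$i$k = 0" using supp \<open>i \<notin> I\<close> by blast+
            thus False using ne P'ij by simp
          qed
        qed
      qed
      obtain vs where vs: "P' = sum_list (map outer vs)" using insert.IH symP' psdP' suppP' by blast
      have "P = outer ((1 / sqrt (P$k$k)) *\<^sub>R p) + P'"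
        using kpos by (simp add: outer_scaleR P'_def power_divide)
      thus ?thesis using vs by (intro exI[of _ "((1 / sqrt (P$k$k)) *\<^sub>R p) # vs"]) simp
    qed
  qed
qed

lemma psd_decomp:
  fixes P :: "real^'n::finite^'n"
  assumes "pos_semidef P"
  shows "\<exists>vs. P = sum_list (map outer vs)"
  using psd_decomp_aux[of "UNIV::'n set"] assms unfolding pos_semidef_def by auto

lemma inner_sum_outer: "(Y::real^'n::finite^'n) \<bullet> sum_list (map outer vs) = (\<Sum>v\<leftarrow>vs. v \<bullet> (Y *v v))"
  by (induction vs) (simp_all add: inner_add_right inner_outer)

lemma psd_inner_nonneg:
  fixes Y P :: "real^'n::finite^'n"
  assumes "\<And>x. 0 \<le> x \<bullet> (Y *v x)" "pos_semidef P"
  shows "0 \<le> Y \<bullet> P"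
proof -
  obtain vs where P: "P = sum_list (map outer vs)" using psd_decomp[OF assms(2)] by blast
  have "0 \<le> (\<Sum>v\<leftarrow>vs. v \<bullet> (Y *v v))" using assms(1) by (induction vs) (simp_all add: add_nonneg_nonneg)
  thus ?thesis by (simp add: inner_sum_outer P)
qed

lemma neg_inner_neg:
  fixes Y P :: "real^'n::finite^'n"
  assumes neg: "\<And>x. x \<noteq> 0 \<Longrightarrow> x \<bullet> (Y *v x) < 0" and "pos_semidef P" "P \<noteq> 0"
  shows "Y \<bullet> P < 0"
proof -
  obtain vs where P: "P = sum_list (map outer vs)" using psd_decomp[OF assms(2)] by blast
  have "\<exists>v\<in>set vs. v \<noteq> 0"
  proof (rule ccontr)
    assume "\<not> ?thesis"
    hence "\<forall>v\<in>set vs. v = 0" by blast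
    hence "sum_list (map outer vs) = 0"
      by (induction vs) (simp_all add: outer_def vec_eq_iff)
    thus False using P \<open>P \<noteq> 0\<close> by simp
  qed
  then obtain v where v: "v \<in> set vs" "v \<noteq> 0" by blast
  have le: "\<And>w. w \<in> set vs \<Longrightarrow> w \<bullet> (Y *v w) \<le> 0"
    using neg by (metis less_imp_le inner_zero_left order_refl)
  have "(\<Sum>w\<leftarrow>vs. w \<bullet> (Y *v w)) < 0"
    using v le
  proof (induction vs)
    case Nil thus ?case by simp
  next
    case (Cons a vs)
    show ?case
    proof (cases "v = a")
      case True
      have "(\<Sum>w\<leftarrow>vs. w \<bullet> (Y *v w)) \<le> 0" using Cons.prems(3) by (intro sum_list_nonpos) auto
      thus ?thesis using True neg[OF \<open>v \<noteq> 0\<close>] by simp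
    next
      case False
      hence "(\<Sum>w\<leftarrow>vs. w \<bullet> (Y *v w)) < 0" using Cons by auto
      thus ?thesis using Cons.prems(3)[of a] by simp
    qed
  qed
  thus ?thesis using P by (simp add: inner_sum_outer)
qed

lemma relu_lipschitz: "norm (relu p - relu q) \<le> norm (p - q)"
  by (rule norm_le_componentwise_cart) (simp add: relu_def)

lemma IDPhi_surj:
  fixes D :: "real^'m::finite^'m"
  assumes "spec_norm D < 1"
  shows "\<exists>q. q - D *v relu q = y"
proof -
  let ?c = "spec_norm D"
  have c0: "0 \<le> ?c" unfolding spec_norm_def by (rule onorm_pos_le) simp
  have "\<exists>!q. y + D *v relu q = q"
  proof (rule banach_fix_type[OF c0 assms], intro allI)
    fix p q :: "real^'m"
    have "dist (y + D *v relu p) (y + D *v relu q) = norm (D *v (relu p - relu q))"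
      by (simp add: dist_norm matrix_vector_mult_diff_distrib)
    also have "\<dots> \<le> ?c * norm (relu p - relu q)"
      unfolding spec_norm_def by (rule onorm) simp
    also have "\<dots> \<le> ?c * dist p q"
      unfolding dist_norm by (intro mult_left_mono relu_lipschitz c0)
    finally show "dist (y + D *v relu p) (y + D *v relu q) \<le> ?c * dist p q" .
  qed
  then obtain q where "y + D *v relu q = q" by blast
  thus ?thesis by (intro exI[of _ q]) (simp add: algebra_simps)
qed

lemma inv_IDPhi_eq:
  fixes D :: "real^'m::finite^'m"
  assumes "spec_norm D < 1"
  shows "inv_IDPhi D y - D *v relu (inv_IDPhi D y) = y"
proof -
  obtain q where "q - D *v relu q = y" using IDPhi_surj[OF assms] by blast
  hence "y \<in> range (\<lambda>q. q - D *v relu q)" by (auto intro: range_eqI)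
  hence "(\<lambda>q. q - D *v relu q) (inv (\<lambda>q. q - D *v relu q) y) = y" by (rule f_inv_into_f)
  thus ?thesis by (simp add: inv_IDPhi_def)
qed

lemma transpose_mv_inner: "(x::real^'b::finite) \<bullet> (transpose (A::real^'b^'a::finite) *v y) = (A *v x) \<bullet> y"
proof -
  have "x \<bullet> (transpose A *v y) = (y v* A) \<bullet> x" by (simp add: inner_commute)
  also have "\<dots> = y \<bullet> (A *v x)" by (rule dot_lmul_matrix)
  finally show ?thesis by (simp add: inner_commute)
qed

lemma sym_inner: "transpose P = P \<Longrightarrow> (u::real^'a::finite) \<bullet> (P *v v) = v \<bullet> (P *v u)"
  by (metis transpose_mv_inner inner_commute)

lemma quad_sandwich:
  "(v::real^'a::finite) \<bullet> ((transpose (E::real^'a^'b::finite) ** G ** E) *v v) = (E *v v) \<bullet> (G *v (E *v v))"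
  by (simp only: matrix_vector_mul_assoc[symmetric] transpose_mv_inner)

lemma neg_mv: "(- (A::real^'a::finite^'b::finite)) *v x = - (A *v x)"
  by (simp add: matrix_vector_mult_def vec_eq_iff sum_negf)

lemma diag_mv:
  assumes "diagonal_mat J"
  shows "(J *v v) $ i = J$i$i * v$i"
proof -
  have "(J *v v) $ i = (\<Sum>j\<in>UNIV. J$i$j * v$j)" by (simp add: matrix_vector_mult_def)
  also have "\<dots> = (\<Sum>j\<in>UNIV. if j = i then J$i$i * v$i else 0)"
    using assms unfolding diagonal_mat_def by (intro sum.cong) auto
  also have "\<dots> = J$i$i * v$i" by simp
  finally show ?thesis .
qed

lemma sector:
  fixes D :: "real^'m::finite^'m" and C :: "real^'n::finite^'m"
  assumes "spec_norm D < 1" "Pm \<in> Pi_NN"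
  shows "0 \<le> (block C D 0 (mat 1) *v join x (nonlin D (C *v x))) \<bullet> (Pm *v (block C D 0 (mat 1) *v join x (nonlin D (C *v x))))"
proof -
  obtain J Q where Pm: "Pm = transpose E_mat ** (Q + Jblk J) ** E_mat" and J: "diagonal_mat J"
    and Q: "entrywise_nonneg Q"
    using assms(2) unfolding Pi_NN_def by blast
  define q where "q = inv_IDPhi D (C *v x)"
  define w where "w = relu q"
  have wn: "nonlin D (C *v x) = w" by (simp add: nonlin_def w_def q_def)
  have qe: "q - D *v w = C *v x" using inv_IDPhi_eq[OF assms(1)] by (simp add: q_def w_def)
  have Mz: "block C D 0 (mat 1) *v join x w = join q w"
    by (simp add: block_mult_join qe[symmetric])
  define r where "r = w - q"
  have Ez: "E_mat *v join q w = join r w"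
    by (simp add: E_mat_def block_mult_join neg_mv r_def)
  have rnn: "0 \<le> r$i" for i by (simp add: r_def w_def relu_def)
  have wnn: "0 \<le> w$i" for i by (simp add: w_def relu_def)
  have rw0: "r$i * w$i = 0" for i by (simp add: r_def w_def relu_def max_def)
  define u where "u = join r w"
  have unn: "0 \<le> u$i" for i using rnn wnn by (cases i) (simp_all add: u_def)
  have Qpart: "0 \<le> u \<bullet> (Q *v u)"
    unfolding inner_vec_def matrix_vector_mult_def using Q unn
    by (auto simp: entrywise_nonneg_def intro!: sum_nonneg mult_nonneg_nonneg)
  have Jpart: "u \<bullet> (Jblk J *v u) = 0"
  proof -
    have "u \<bullet> (Jblk J *v u) = r \<bullet> (J *v w) + w \<bullet> (J *v r)"
      by (simp add: u_def Jblk_def block_mult_join inner_join)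
    also have "r \<bullet> (J *v w) = 0"
    proof -
      have "r$i * (J *v w)$i = J$i$i * (r$i * w$i)" for i by (simp add: diag_mv[OF J] ac_simps)
      thus ?thesis unfolding inner_vec_def by (simp only: inner_real_def rw0 mult_zero_right sum.neutral_const)
    qed
    also have "w \<bullet> (J *v r) = 0"
    proof -
      have "w$i * (J *v r)$i = J$i$i * (r$i * w$i)" for i by (simp add: diag_mv[OF J] ac_simps)
      thus ?thesis unfolding inner_vec_def by (simp only: inner_real_def rw0 mult_zero_right sum.neutral_const)
    qed
    finally show ?thesis by simp
  qed
  have "(join q w) \<bullet> (Pm *v join q w) = u \<bullet> ((Q + Jblk J) *v u)"
    unfolding Pm quad_sandwich Ez u_def ..
  also have "\<dots> = u \<bullet> (Q *v u) + u \<bullet> (Jblk J *v u)"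
    by (simp add: matrix_vector_mult_add_rdistrib inner_add_right)
  finally have "0 \<le> (join q w) \<bullet> (Pm *v join q w)" using Qpart Jpart by simp
  thus ?thesis unfolding wn Mz .
qed

lemma quad_LP:
  fixes P :: "real^'n::finite^'n"
  assumes sym: "transpose P = P"
  shows "join x w \<bullet> (block (P ** A + transpose A ** P) (P ** B) (transpose B ** P) 0 *v join x w)
         = 2 * (x \<bullet> (P *v (A *v x + B *v w)))"
proof -
  have "join x w \<bullet> (block (P ** A + transpose A ** P) (P ** B) (transpose B ** P) 0 *v join x w)
     = x \<bullet> (P *v (A *v x)) + x \<bullet> (transpose A *v (P *v x)) + x \<bullet> (P *v (B *v w)) + w \<bullet> (transpose B *v (P *v x))"
    by (simp add: block_mult_join inner_join matrix_vector_mult_add_rdistrib inner_add_right matrix_vector_mul_assoc[symmetric])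
  also have "x \<bullet> (transpose A *v (P *v x)) = x \<bullet> (P *v (A *v x))"
    by (simp only: transpose_mv_inner sym_inner[OF sym, of "A *v x" x])
  also have "w \<bullet> (transpose B *v (P *v x)) = x \<bullet> (P *v (B *v w))"
    by (simp only: transpose_mv_inner sym_inner[OF sym, of "B *v w" x])
  finally show ?thesis by (simp add: matrix_vector_right_distrib inner_add_right)
qed

lemma V_deriv:
  fixes P :: "real^'n::finite^'n"
  assumes sym: "transpose P = P" and d: "(x has_vector_derivative xd) (at t within S)"
  shows "((\<lambda>t. x t \<bullet> (P *v x t)) has_real_derivative 2 * (x t \<bullet> (P *v xd))) (at t within S)"
proof -
  have dP: "((\<lambda>t. P *v x t) has_vector_derivative (P *v xd)) (at t within S)"
    by (rule bounded_linear.has_vector_derivative[OF matrix_vector_mul_bounded_linear d])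
  have "((\<lambda>t. x t \<bullet> (P *v x t)) has_vector_derivative (x t \<bullet> (P *v xd) + xd \<bullet> (P *v x t))) (at t within S)"
    by (rule bounded_bilinear.has_vector_derivative[OF bounded_bilinear_inner d dP])
  moreover have "x t \<bullet> (P *v xd) + xd \<bullet> (P *v x t) = 2 * (x t \<bullet> (P *v xd))"
    using sym_inner[OF sym, of xd "x t"] by simp
  ultimately show ?thesis by (simp add: has_real_derivative_iff_has_vector_derivative)
qed

lemma exp_neg_tendsto: "(c::real) > 0 \<Longrightarrow> ((\<lambda>t. exp (- c * t)) \<longlongrightarrow> 0) at_top"
  by real_asymp

lemma decreasing_lemma:
  fixes W :: "real \<Rightarrow> real"
  assumes d: "\<And>t. t \<ge> 0 \<Longrightarrow> \<exists>y. (W has_real_derivative y) (at t within {0..}) \<and> y \<le> 0"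
  and T: "T \<ge> 0"
  shows "W T \<le> W 0"
proof (cases "T = 0")
  case True thus ?thesis by simp
next
  case False
  hence T0: "0 \<le> T" using T by simp
  show ?thesis
  proof (rule DERIV_nonpos_imp_decreasing_open[OF T0])
    fix t assume t: "0 < t" "t < T"
    obtain y where y: "(W has_real_derivative y) (at t within {0..})" "y \<le> 0" using d[of t] t by auto
    have "(W has_real_derivative y) (at t within {0<..})" by (rule DERIV_subset[OF y(1)]) auto
    hence "(W has_real_derivative y) (at t)" using t at_within_open[of t "{0<..}"] by simp
    thus "\<exists>y. (W has_real_derivative y) (at t) \<and> y \<le> 0" using y(2) by blast
  next
    show "continuous_on {0..T} W"
      unfolding continuous_on_eq_continuous_within
    proof
      fix t assume t: "t \<in> {0..T}"
      obtain y where y: "(W has_real_derivative y) (at t within {0..})" using d[of t] t by auto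
      have "continuous (at t within {0..}) W" by (rule DERIV_continuous[OF y])
      thus "continuous (at t within {0..T}) W" by (rule continuous_within_subset) auto
    qed
  qed
qed

theorem primal_gas:
  fixes A :: "real^'n::finite^'n" and B :: "real^'m::finite^'n" and C :: "real^'n^'m" and D :: "real^'m^'m"
  assumes nD: "spec_norm D < 1" and feas: "primal_LMI_feasible A B C D"
  shows "globally_asymptotically_stable A B C D"
proof -
  obtain P Pm where Ppd: "pos_def P" and Pm: "Pm \<in> Pi_NN"
    and Fnd: "neg_def (block (P ** A + transpose A ** P) (P ** B) (transpose B ** P) 0
              + transpose (block C D 0 (mat 1)) ** Pm ** block C D 0 (mat 1))"
    using feas unfolding primal_LMI_feasible_def by blast
  define M where "M = block C D 0 (mat 1)"
  define LP where "LP = block (P ** A + transpose A ** P) (P ** B) (transpose B ** P) 0"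
  define F where "F = LP + transpose M ** Pm ** M"
  have Fnd': "\<And>z. z \<noteq> 0 \<Longrightarrow> z \<bullet> (F *v z) < 0" using Fnd unfolding neg_def_def F_def LP_def M_def by blast
  have symP: "transpose P = P" using Ppd unfolding pos_def_def symmetric_mat_def by blast
  obtain eP where eP: "eP > 0" "\<And>x. eP * norm x ^ 2 \<le> x \<bullet> (P *v x)"
    using quad_uniform[of P] Ppd unfolding pos_def_def by blast
  obtain K where K: "K > 0" "\<And>x. \<bar>x \<bullet> (P *v x)\<bar> \<le> K * norm x ^ 2"
    using quad_upper[of P] by blast
  obtain eF where eF: "eF > 0" "\<And>z. eF * norm z ^ 2 \<le> z \<bullet> ((- F) *v z)"
    using quad_uniform[of "- F"] Fnd' by (auto simp: neg_mv)
  have key: "2 * (x \<bullet> (P *v (A *v x + B *v nonlin D (C *v x)))) \<le> - eF * norm x ^ 2" for x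
  proof -
    define w where "w = nonlin D (C *v x)"
    define z where "z = join x w"
    have a: "z \<bullet> (LP *v z) = 2 * (x \<bullet> (P *v (A *v x + B *v w)))"
      unfolding z_def LP_def by (rule quad_LP[OF symP])
    have b: "z \<bullet> (F *v z) = z \<bullet> (LP *v z) + (M *v z) \<bullet> (Pm *v (M *v z))"
      unfolding F_def by (simp only: matrix_vector_mult_add_rdistrib inner_add_right quad_sandwich)
    have c: "eF * norm z ^ 2 \<le> - (z \<bullet> (F *v z))" using eF(2)[of z] by (simp add: neg_mv)
    have d: "0 \<le> (M *v z) \<bullet> (Pm *v (M *v z))"
      unfolding M_def z_def w_def by (rule sector[OF nD Pm])
    have e: "norm x ^ 2 \<le> norm z ^ 2" unfolding z_def norm_join_sq by simp
    have "eF * norm x ^ 2 \<le> eF * norm z ^ 2" using e eF(1) by (simp add: mult_left_mono)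
    thus ?thesis using a b c d unfolding w_def by linarith
  qed
  define c where "c = eF / K"
  have c0: "c > 0" using eF(1) K(1) by (simp add: c_def)
  have bound: "eP * norm (x t) ^ 2 \<le> exp (- c * t) * (K * norm (x 0) ^ 2)"
    if sol: "is_solution A B C D x" and t: "t \<ge> 0" for x t
  proof -
    define V where "V = (\<lambda>t. x t \<bullet> (P *v x t))"
    define W where "W = (\<lambda>t. exp (c * t) * V t)"
    have "\<exists>y. (W has_real_derivative y) (at s within {0..}) \<and> y \<le> 0" if s: "s \<ge> 0" for s
    proof -
      define xd where "xd = A *v x s + B *v nonlin D (C *v x s)"
      have dx: "(x has_vector_derivative xd) (at s within {0..})"
        using sol s unfolding is_solution_def xd_def by blast
      have dV: "(V has_real_derivative 2 * (x s \<bullet> (P *v xd))) (at s within {0..})"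
        unfolding V_def by (rule V_deriv[OF symP dx])
      have dE: "((\<lambda>t. exp (c * t)) has_real_derivative exp (c * s) * c) (at s within {0..})"
        by (auto intro!: derivative_eq_intros)
      have dW: "(W has_real_derivative (exp (c * s) * c * V s + exp (c * s) * (2 * (x s \<bullet> (P *v xd))))) (at s within {0..})"
        unfolding W_def by (rule DERIV_cong[OF DERIV_mult[OF dE dV]]) (simp add: algebra_simps)
      have k: "2 * (x s \<bullet> (P *v xd)) \<le> - eF * norm (x s) ^ 2" using key[of "x s"] unfolding xd_def .
      have vK: "V s \<le> K * norm (x s) ^ 2" using K(2)[of "x s"] unfolding V_def by linarith
      have "c * V s \<le> c * (K * norm (x s) ^ 2)" using vK c0 by (simp add: mult_left_mono)
      also have "\<dots> = eF * norm (x s) ^ 2" using K(1) by (simp add: c_def)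
      finally have "c * V s + 2 * (x s \<bullet> (P *v xd)) \<le> 0" using k by linarith
      hence "exp (c * s) * (c * V s + 2 * (x s \<bullet> (P *v xd))) \<le> 0"
        by (simp add: mult_nonneg_nonpos)
      hence "exp (c * s) * c * V s + exp (c * s) * (2 * (x s \<bullet> (P *v xd))) \<le> 0"
        by (simp add: algebra_simps)
      thus ?thesis using dW by blast
    qed
    hence "W t \<le> W 0" using decreasing_lemma t by blast
    hence "exp (c * t) * V t \<le> V 0" by (simp add: W_def)
    hence "V t \<le> exp (- c * t) * V 0"
      by (simp add: exp_minus field_simps)
    moreover have "V 0 \<le> K * norm (x 0) ^ 2" using K(2)[of "x 0"] unfolding V_def by linarith
    moreover have "eP * norm (x t) ^ 2 \<le> V t" using eP(2) unfolding V_def by blast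
    ultimately show ?thesis
      by (meson mult_left_mono exp_ge_zero order_trans)
  qed
  have bound2: "norm (x t) ^ 2 \<le> (K / eP) * norm (x 0) ^ 2 * exp (- c * t)"
    if "is_solution A B C D x" "t \<ge> 0" for x t
    using bound[OF that] eP(1) by (simp add: field_simps)
  show ?thesis
    unfolding globally_asymptotically_stable_def
  proof (intro conjI allI impI)
    fix \<epsilon> :: real assume e: "\<epsilon> > 0"
    define \<delta> where "\<delta> = \<epsilon> / sqrt (K / eP)"
    have KeP: "K / eP > 0" using K(1) eP(1) by simp
    have d0: "\<delta> > 0" using e KeP by (simp add: \<delta>_def)
    show "\<exists>\<delta>>0. \<forall>x. is_solution A B C D x \<and> norm (x 0) < \<delta> \<longrightarrow> (\<forall>t\<ge>0. norm (x t) < \<epsilon>)"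
    proof (intro exI[of _ \<delta>] conjI d0 allI impI)
      fix x t assume xs: "is_solution A B C D x \<and> norm (x 0) < \<delta>" and t: "(t::real) \<ge> 0"
      have "norm (x t) ^ 2 \<le> (K / eP) * norm (x 0) ^ 2 * exp (- c * t)" using bound2 xs t by blast
      also have "\<dots> \<le> (K / eP) * norm (x 0) ^ 2"
      proof (rule mult_left_le)
        show "exp (- c * t) \<le> 1" using c0 t by simp
        show "0 \<le> K / eP * norm (x 0) ^ 2" using KeP by (intro mult_nonneg_nonneg) simp_all
      qed
      also have "\<dots> < (K / eP) * \<delta> ^ 2"
        using KeP xs by (intro mult_strict_left_mono power_strict_mono) auto
      also have "\<dots> = \<epsilon> ^ 2" using KeP K(1) eP(1) by (simp add: \<delta>_def power_divide)
      finally show "norm (x t) < \<epsilon>" using e by (meson power_less_imp_less_base less_imp_le)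
    qed
  next
    fix x assume xs: "is_solution A B C D x"
    have lim: "((\<lambda>t. (K / eP) * norm (x 0) ^ 2 * exp (- c * t)) \<longlongrightarrow> 0) at_top"
      by (rule tendsto_mult_right_zero[OF exp_neg_tendsto[OF c0]])
    have "((\<lambda>t. norm (x t) ^ 2) \<longlongrightarrow> 0) at_top"
      by (rule Lim_null_comparison[OF _ lim])
         (use bound2[OF xs] in \<open>auto intro: eventually_mono[OF eventually_ge_at_top[of 0]]\<close>)
    hence "((\<lambda>t. sqrt (norm (x t) ^ 2)) \<longlongrightarrow> sqrt 0) at_top" by (rule tendsto_real_sqrt)
    hence "((\<lambda>t. norm (x t)) \<longlongrightarrow> 0) at_top" by simp
    thus "(x \<longlongrightarrow> 0) at_top" by (simp add: tendsto_norm_zero_iff)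
  qed
qed

lemma mm_add_r: "((A::real^'b::finite^'a::finite) + B) ** (C::real^'c::finite^'b) = A ** C + B ** C"
  by (simp add: matrix_matrix_mult_def vec_eq_iff distrib_right sum.distrib)
lemma mm_scale_l: "(k *\<^sub>R (A::real^'b::finite^'a::finite)) ** (B::real^'c::finite^'b) = k *\<^sub>R (A ** B)"
  by (simp add: scalar_matrix_assoc)
lemma mm_scale_r: "(A::real^'b::finite^'a::finite) ** (k *\<^sub>R (B::real^'c::finite^'b)) = k *\<^sub>R (A ** B)"
  by (simp add: matrix_matrix_mult_def vec_eq_iff sum_distrib_left mult_ac)
lemma mm_neg_l: "(- (A::real^'b::finite^'a::finite)) ** (B::real^'c::finite^'b) = - (A ** B)"
  by (simp add: matrix_matrix_mult_def vec_eq_iff sum_negf)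
lemma transpose_add: "transpose ((A::real^'b::finite^'a::finite) + B) = transpose A + transpose B"
  by (simp add: transpose_def vec_eq_iff)
lemma transpose_neg: "transpose (- (A::real^'b::finite^'a::finite)) = - transpose A"
  by (simp add: transpose_def vec_eq_iff)
lemma transpose_diff: "transpose ((A::real^'b::finite^'a::finite) - B) = transpose A - transpose B"
  by (simp add: transpose_def vec_eq_iff)
lemma transpose_zero: "transpose (0::real^'b::finite^'a::finite) = 0"
  by (simp add: transpose_def vec_eq_iff)
lemma block_zero: "block 0 0 0 0 = 0"
  by (simp add: block_def vec_eq_iff split: sum.splits)

lemma inner_block:
  "block X Y Z U \<bullet> block X' Y' Z' U' = X \<bullet> X' + Y \<bullet> Y' + Z \<bullet> Z' + U \<bullet> U'"
  by (simp add: inner_mat sum_UNIV_plus sum.distrib)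

definition Fm :: "real^'n::finite^'n \<Rightarrow> real^'m::finite^'n \<Rightarrow> real^'n^'m \<Rightarrow> real^'m^'m
   \<Rightarrow> real^'n^'n \<Rightarrow> real^('m + 'm)^('m + 'm) \<Rightarrow> real^('n + 'm)^('n + 'm)" where
  "Fm A B C D P Pm = block (P ** A + transpose A ** P) (P ** B) (transpose B ** P) 0
              + transpose (block C D 0 (mat 1)) ** Pm ** block C D 0 (mat 1)"

lemma Fm_add: "Fm A B C D (P + P') (Pm + Pm') = Fm A B C D P Pm + Fm A B C D P' Pm'"
  by (simp add: Fm_def block_add matrix_add_ldistrib mm_add_r transpose_add algebra_simps)

lemma Fm_scale: "Fm A B C D (k *\<^sub>R P) (k *\<^sub>R Pm) = k *\<^sub>R Fm A B C D P Pm"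
  by (simp add: Fm_def block_scaleR mm_scale_l mm_scale_r transpose_scalar scaleR_add_right)

lemma Fm_zero: "Fm A B C D 0 0 = 0"
  by (simp add: Fm_def transpose_zero block_zero)

lemma Fm_P: "Fm A B C D P 0 = block (P ** A + transpose A ** P) (P ** B) (transpose B ** P) 0"
  by (simp add: Fm_def)

lemma Fm_Pm: "Fm A B C D 0 Pm = transpose (block C D 0 (mat 1)) ** Pm ** block C D 0 (mat 1)"
  by (simp add: Fm_def transpose_zero block_zero)

lemma Jblk_add: "Jblk (J + J') = Jblk J + Jblk J'"
  by (simp add: Jblk_def block_add)
lemma Jblk_scale: "Jblk (k *\<^sub>R J) = k *\<^sub>R Jblk J"
  by (simp add: Jblk_def block_scaleR)
lemma Jblk_zero: "Jblk 0 = 0"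
  by (simp add: Jblk_def block_zero)

lemma Pi_NN_zero: "0 \<in> Pi_NN"
  unfolding Pi_NN_def
  by (rule CollectI, rule exI[of _ 0], rule exI[of _ 0])
     (simp add: Jblk_zero diagonal_mat_def symmetric_mat_def entrywise_nonneg_def transpose_zero)

lemma Pi_NN_add: "Pm \<in> Pi_NN \<Longrightarrow> Pm' \<in> Pi_NN \<Longrightarrow> Pm + Pm' \<in> Pi_NN"
proof -
  assume "Pm \<in> Pi_NN" "Pm' \<in> Pi_NN"
  then obtain J Q J' Q' where Pm: "Pm = transpose E_mat ** (Q + Jblk J) ** E_mat"
    and c: "diagonal_mat J" "symmetric_mat Q" "entrywise_nonneg Q"
    and Pm': "Pm' = transpose E_mat ** (Q' + Jblk J') ** E_mat"
    and c': "diagonal_mat J'" "symmetric_mat Q'" "entrywise_nonneg Q'"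
    unfolding Pi_NN_def by blast
  have "Pm + Pm' = transpose E_mat ** ((Q + Q') + Jblk (J + J')) ** E_mat"
    by (simp add: Pm Pm' Jblk_add matrix_add_ldistrib mm_add_r algebra_simps)
  moreover have "diagonal_mat (J + J')" using c c' by (simp add: diagonal_mat_def)
  moreover have "symmetric_mat (Q + Q')" using c c' by (simp add: symmetric_mat_def transpose_add)
  moreover have "entrywise_nonneg (Q + Q')" using c c' by (simp add: entrywise_nonneg_def)
  ultimately show ?thesis unfolding Pi_NN_def by blast
qed

lemma Pi_NN_scale: "Pm \<in> Pi_NN \<Longrightarrow> 0 \<le> k \<Longrightarrow> k *\<^sub>R Pm \<in> Pi_NN"
proof -
  assume "Pm \<in> Pi_NN" and k: "0 \<le> k"
  then obtain J Q where Pm: "Pm = transpose E_mat ** (Q + Jblk J) ** E_mat"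
    and c: "diagonal_mat J" "symmetric_mat Q" "entrywise_nonneg Q"
    unfolding Pi_NN_def by blast
  have "k *\<^sub>R Pm = transpose E_mat ** ((k *\<^sub>R Q) + Jblk (k *\<^sub>R J)) ** E_mat"
    by (simp add: Pm Jblk_scale mm_scale_l mm_scale_r scaleR_add_right[symmetric])
  moreover have "diagonal_mat (k *\<^sub>R J)" using c by (simp add: diagonal_mat_def)
  moreover have "symmetric_mat (k *\<^sub>R Q)" using c by (simp add: symmetric_mat_def transpose_scalar)
  moreover have "entrywise_nonneg (k *\<^sub>R Q)" using c k by (simp add: entrywise_nonneg_def)
  ultimately show ?thesis unfolding Pi_NN_def by blast
qed

lemma diag_transpose: "diagonal_mat J \<Longrightarrow> transpose J = J"
  unfolding diagonal_mat_def by (simp add: transpose_def vec_eq_iff) metis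

lemma Pi_NN_sym: "(Pm::real^('m::finite + 'm)^('m + 'm)) \<in> Pi_NN \<Longrightarrow> transpose Pm = Pm"
proof -
  assume "Pm \<in> Pi_NN"
  then obtain J Q where Pm: "Pm = transpose E_mat ** (Q + Jblk J) ** E_mat"
    and c: "diagonal_mat J" "symmetric_mat Q"
    unfolding Pi_NN_def by blast
  have "transpose (Q + Jblk J) = Q + Jblk J"
    using c by (simp add: transpose_add symmetric_mat_def Jblk_def transpose_block diag_transpose transpose_zero)
  moreover have "transpose (transpose E_mat ** X ** E_mat) = transpose E_mat ** transpose X ** E_mat" for X :: "real^('m + 'm)^('m + 'm)"
    by (simp only: matrix_transpose_mul transpose_transpose matrix_mul_assoc)
  ultimately show ?thesis unfolding Pm by simp
qed

lemma transpose_sandwich: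
  "transpose (transpose (E::real^'a::finite^'b::finite) ** (X::real^'b^'b) ** E) = transpose E ** transpose X ** E"
  by (simp only: matrix_transpose_mul transpose_transpose matrix_mul_assoc)

lemma Fm_sym:
  fixes A :: "real^'n::finite^'n" and B :: "real^'m::finite^'n" and C :: "real^'n^'m" and D :: "real^'m^'m"
  assumes sP: "transpose P = P" and sPm: "transpose Pm = Pm"
  shows "transpose (Fm A B C D P Pm) = Fm A B C D P Pm"
proof -
  have t1: "transpose (P ** A + transpose A ** P) = P ** A + transpose A ** P"
    by (simp only: transpose_add matrix_transpose_mul transpose_transpose sP add.commute)
  have t2: "transpose (transpose B ** P) = P ** B"
    by (simp only: matrix_transpose_mul transpose_transpose sP)
  have t3: "transpose (P ** B) = transpose B ** P"
    by (simp only: matrix_transpose_mul sP)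
  have b: "transpose (block (P ** A + transpose A ** P) (P ** B) (transpose B ** P) 0)
     = block (P ** A + transpose A ** P) (P ** B) (transpose B ** P) (0::real^'m^'m)"
    by (simp only: transpose_block t1 t2 t3 transpose_zero)
  have c: "transpose (transpose (block C D 0 (mat 1)) ** Pm ** block C D 0 (mat 1))
      = transpose (block C D 0 (mat 1)) ** Pm ** block C D 0 (mat 1)"
    by (simp only: transpose_sandwich sPm)
  show ?thesis unfolding Fm_def transpose_add b c ..
qed

lemma LP_inner:
  fixes H :: "real^('n::finite + 'm::finite)^('n + 'm)" and P :: "real^'n^'n"
  assumes symH: "transpose H = H" and symP: "transpose P = P"
  shows "block (P ** A + transpose A ** P) (P ** B) (transpose B ** P) 0 \<bullet> H
       = (A ** blk11 H + B ** transpose (blk12 H) + transpose (A ** blk11 H + B ** transpose (blk12 H))) \<bullet> P"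
proof -
  have hs: "H$i$j = H$j$i" for i j
  proof -
    have "H$j$i = transpose H $ i $ j" by (simp add: transpose_def)
    thus ?thesis using symH by simp
  qed
  have h21: "blk21 H = transpose (blk12 H)"
    unfolding blk12_def blk21_def transpose_def vec_eq_iff using hs by simp
  have h11: "transpose (blk11 H) = blk11 H"
    unfolding blk11_def transpose_def vec_eq_iff using hs by simp
  let ?H11 = "blk11 H" and ?H12 = "blk12 H"
  have e0: "block (P ** A + transpose A ** P) (P ** B) (transpose B ** P) 0 \<bullet> H
     = (P ** A) \<bullet> ?H11 + (transpose A ** P) \<bullet> ?H11 + (P ** B) \<bullet> ?H12 + (transpose B ** P) \<bullet> transpose ?H12"
    by (subst (2) block_blks) (simp add: inner_block h21 inner_add_left)
  have e1: "(P ** A) \<bullet> ?H11 = (?H11 ** transpose A) \<bullet> P"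
    by (simp only: inner_commute[of "P ** A"] inner_mmul_right)
  have e2: "(transpose A ** P) \<bullet> ?H11 = (A ** ?H11) \<bullet> P"
    by (simp only: inner_commute[of "transpose A ** P"] inner_mmul_left transpose_transpose)
  have e3: "(P ** B) \<bullet> ?H12 = (?H12 ** transpose B) \<bullet> P"
    by (simp only: inner_commute[of "P ** B"] inner_mmul_right)
  have e4: "(transpose B ** P) \<bullet> transpose ?H12 = (?H12 ** transpose B) \<bullet> P"
  proof -
    have "(transpose B ** P) \<bullet> transpose ?H12 = transpose (transpose B ** P) \<bullet> transpose (transpose ?H12)"
      by (rule inner_transpose[symmetric])
    also have "\<dots> = (P ** B) \<bullet> ?H12" by (simp add: matrix_transpose_mul symP)
    finally show ?thesis by (simp only: inner_commute[of "P ** B"] inner_mmul_right)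
  qed
  have e5: "(B ** transpose ?H12) \<bullet> P = (?H12 ** transpose B) \<bullet> P"
  proof -
    have "(B ** transpose ?H12) \<bullet> P = transpose (B ** transpose ?H12) \<bullet> transpose P"
      by (rule inner_transpose[symmetric])
    thus ?thesis by (simp add: matrix_transpose_mul symP)
  qed
  have e6: "(A ** ?H11 + B ** transpose ?H12 + transpose (A ** ?H11 + B ** transpose ?H12)) \<bullet> P
       = (A ** ?H11) \<bullet> P + (B ** transpose ?H12) \<bullet> P + (?H11 ** transpose A) \<bullet> P + (?H12 ** transpose B) \<bullet> P"
    by (simp add: transpose_add matrix_transpose_mul h11 inner_add_left)
  show ?thesis using e0 e1 e2 e3 e4 e5 e6 by linarith
qed

lemma sandwich_inner:
  fixes H :: "real^'a::finite^'a" and M :: "real^'a^'b::finite" and E :: "real^'b^'c::finite"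
  shows "H \<bullet> (transpose M ** (transpose E ** G ** E) ** M) = ((E ** M) ** H ** transpose (E ** M)) \<bullet> G"
proof -
  have "transpose M ** (transpose E ** G ** E) ** M = (transpose (E ** M) ** G) ** (E ** M)"
    by (simp add: matrix_transpose_mul matrix_mul_assoc)
  hence "H \<bullet> (transpose M ** (transpose E ** G ** E) ** M) = (H ** transpose (E ** M)) \<bullet> (transpose (E ** M) ** G)"
    by (simp only: inner_mmul_right)
  also have "\<dots> = ((E ** M) ** (H ** transpose (E ** M))) \<bullet> G"
    by (simp only: inner_mmul_left transpose_transpose)
  finally show ?thesis by (simp add: matrix_mul_assoc)
qed

lemma EM: "E_mat ** block C D 0 (mat 1) = block (- C) (mat 1 - D) 0 (mat 1)"
  by (simp add: E_mat_def block_mult mm_neg_l algebra_simps)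

lemma blk12_X:
  fixes H :: "real^('n::finite + 'm::finite)^('n + 'm)" and C :: "real^'n^'m" and D :: "real^'m^'m"
  shows "blk12 (block (- C) (mat 1 - D) 0 (mat 1) ** H ** transpose (block (- C) (mat 1 - D) 0 (mat 1)))
     = - (C ** blk12 H) + (mat 1 - D) ** blk22 H"
  by (subst block_blks[of H]) (simp add: transpose_block block_mult mm_neg_l transpose_zero)

lemma inner_Jblk:
  "(X::real^('m::finite + 'm)^('m + 'm)) \<bullet> Jblk J = blk12 X \<bullet> J + blk21 X \<bullet> J"
  by (subst block_blks[of X]) (simp add: Jblk_def inner_block)

definition qpsd :: "real^'a::finite^'a \<Rightarrow> bool" where
  "qpsd S \<longleftrightarrow> (\<forall>x. 0 \<le> x \<bullet> (S *v x))"

lemma inner_diag_zero: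
  assumes "diagonal_mat J" "\<And>i. Y$i$i = 0"
  shows "Y \<bullet> J = 0"
proof -
  have z: "Y$i$j * J$i$j = 0" for i j
    using assms unfolding diagonal_mat_def by (cases "i = j") auto
  show ?thesis unfolding inner_mat by (intro sum.neutral ballI) (rule z)
qed

lemma antisym_qpsd:
  assumes "transpose K = - (K::real^'a::finite^'a)"
  shows "qpsd K"
proof -
  have "x \<bullet> (K *v x) = 0" for x
  proof -
    have "x \<bullet> (transpose K *v x) = (K *v x) \<bullet> x" by (rule transpose_mv_inner)
    hence "- (x \<bullet> (K *v x)) = x \<bullet> (K *v x)" using assms by (simp add: neg_mv inner_commute)
    thus ?thesis by simp
  qed
  thus ?thesis by (simp add: qpsd_def)
qed

lemma qpsd_outer: "qpsd (outer v)"
  by (simp add: qpsd_def quad_outer)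

lemma dual_psd:
  fixes Y :: "real^'a::finite^'a"
  assumes "\<And>S. qpsd S \<Longrightarrow> 0 \<le> Y \<bullet> S"
  shows "pos_semidef Y"
proof -
  define K where "K = Y - transpose Y"
  have tK: "transpose K = - K" by (simp add: K_def transpose_diff)
  have tK': "transpose (- K) = - (- K)" by (simp add: tK transpose_neg)
  have "0 \<le> Y \<bullet> K" using assms antisym_qpsd[OF tK] by blast
  moreover have "0 \<le> Y \<bullet> (- K)" using assms antisym_qpsd[OF tK'] by blast
  ultimately have YK: "Y \<bullet> K = 0" by simp
  have "transpose Y \<bullet> K = transpose (transpose Y) \<bullet> transpose K" by (rule inner_transpose[symmetric])
  also have "\<dots> = - (Y \<bullet> K)" by (simp add: tK)
  finally have "transpose Y \<bullet> K = 0" using YK by simp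
  hence "K \<bullet> K = 0" using YK by (simp add: K_def inner_diff_left)
  hence "K = 0" by simp
  hence sym: "symmetric_mat Y" by (simp add: K_def symmetric_mat_def)
  have "0 \<le> x \<bullet> (Y *v x)" for x
    using assms[OF qpsd_outer[of x]] by (simp add: inner_outer)
  thus ?thesis using sym by (simp add: pos_semidef_def)
qed

lemma cone_lim:
  fixes g c :: real
  assumes "\<And>t. t > 0 \<Longrightarrow> 0 \<le> t * g - c"
  shows "0 \<le> g"
proof (rule ccontr)
  assume "\<not> 0 \<le> g"
  hence g: "g < 0" by simp
  define t where "t = (\<bar>c\<bar> + 1) / (- g)"
  have t0: "t > 0" unfolding t_def using g by (intro divide_pos_pos) auto
  have "t * g = - (\<bar>c\<bar> + 1)" using g by (simp add: t_def field_simps)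
  thus False using assms[OF t0] by linarith
qed

lemma delta_inner: "(X::real^'b::finite^'a::finite) \<bullet> (\<chi> a b. if a = i \<and> b = j then 1 else 0) = X$i$j"
proof -
  have inn: "(\<Sum>b\<in>UNIV. X$a$b * (if a = i \<and> b = j then 1 else 0)) = (if a = i then X$a$j else 0)" for a
    by (cases "a = i") (simp_all add: if_distrib cong: if_cong)
  show ?thesis unfolding inner_mat vec_lambda_beta inn by simp
qed

lemma X_sym:
  fixes N :: "real^'a::finite^'c::finite" and H :: "real^'a^'a"
  assumes "transpose H = H"
  shows "transpose (N ** H ** transpose N) = N ** H ** transpose N"
  using assms by (simp only: matrix_transpose_mul transpose_transpose matrix_mul_assoc)

lemma dual_imp_not_primal:
  fixes A :: "real^'n::finite^'n" and B :: "real^'m::finite^'n" and C :: "real^'n^'m" and D :: "real^'m^'m"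
  assumes dual: "dual_LMI_feasible A B C D"
  shows "\<not> primal_LMI_feasible A B C D"
proof
  assume "primal_LMI_feasible A B C D"
  then obtain P Pm where Ppd: "pos_def P" and Pm: "Pm \<in> Pi_NN" and Fnd: "neg_def (Fm A B C D P Pm)"
    unfolding primal_LMI_feasible_def Fm_def by blast
  obtain H :: "real^('n + 'm)^('n + 'm)" where H0: "H \<noteq> 0" and Hpsd: "pos_semidef H"
    and Wpsd: "pos_semidef (A ** blk11 H + B ** transpose (blk12 H)
                  + transpose (A ** blk11 H + B ** transpose (blk12 H)))"
    and NN: "entrywise_nonneg (block (- C) (mat 1 - D) 0 (mat 1) ** H
                       ** transpose (block (- C) (mat 1 - D) 0 (mat 1)))"
    and dg: "\<forall>i. (- (C ** blk12 H) + (mat 1 - D) ** blk22 H) $ i $ i = 0"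
    using dual unfolding dual_LMI_feasible_def by blast
  have symH: "transpose H = H" using Hpsd unfolding pos_semidef_def symmetric_mat_def by blast
  have symP: "transpose P = P" using Ppd unfolding pos_def_def symmetric_mat_def by blast
  have neg: "Fm A B C D P Pm \<bullet> H < 0"
    by (rule neg_inner_neg[OF _ Hpsd H0]) (use Fnd in \<open>auto simp: neg_def_def\<close>)
  define W where "W = A ** blk11 H + B ** transpose (blk12 H)"
  define N where "N = block (- C) (mat 1 - D) 0 (mat 1)"
  define X where "X = N ** H ** transpose N"
  have p1: "0 \<le> block (P ** A + transpose A ** P) (P ** B) (transpose B ** P) 0 \<bullet> H"
  proof -
    have "block (P ** A + transpose A ** P) (P ** B) (transpose B ** P) 0 \<bullet> H = (W + transpose W) \<bullet> P"
      unfolding W_def by (rule LP_inner[OF symH symP])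
    hence "block (P ** A + transpose A ** P) (P ** B) (transpose B ** P) 0 \<bullet> H = P \<bullet> (W + transpose W)"
      by (simp only: inner_commute)
    moreover have "0 \<le> P \<bullet> (W + transpose W)"
    proof (rule psd_inner_nonneg)
      show "pos_semidef (W + transpose W)" using Wpsd by (simp add: W_def)
      fix x show "0 \<le> x \<bullet> (P *v x)" using Ppd unfolding pos_def_def
        by (cases "x = 0") (auto intro: less_imp_le)
    qed
    ultimately show ?thesis by simp
  qed
  obtain J Q where PmJQ: "Pm = transpose E_mat ** (Q + Jblk J) ** E_mat" and J: "diagonal_mat J"
    and Q: "entrywise_nonneg Q"
    using Pm unfolding Pi_NN_def by blast
  have p2: "0 \<le> (transpose (block C D 0 (mat 1)) ** Pm ** block C D 0 (mat 1)) \<bullet> H"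
  proof -
    have "(transpose (block C D 0 (mat 1)) ** Pm ** block C D 0 (mat 1)) \<bullet> H = X \<bullet> (Q + Jblk J)"
      unfolding PmJQ X_def N_def EM[symmetric] by (simp add: inner_commute sandwich_inner)
    also have "\<dots> = X \<bullet> Q + X \<bullet> Jblk J" by (simp add: inner_add_right)
    finally have e1: "(transpose (block C D 0 (mat 1)) ** Pm ** block C D 0 (mat 1)) \<bullet> H = X \<bullet> Q + X \<bullet> Jblk J" .
    have e2: "X \<bullet> Jblk J = 0"
    proof -
      have sX: "transpose X = X" unfolding X_def by (rule X_sym[OF symH])
      have b12: "blk12 X $ k $ k = 0" for k using dg by (simp add: X_def N_def blk12_X)
      have b21: "blk21 X $ k $ k = 0" for k
      proof -
        have "blk21 X $ k $ k = transpose X $ Inl k $ Inr k" by (simp add: blk21_def transpose_def)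
        also have "\<dots> = blk12 X $ k $ k" by (simp add: sX blk12_def)
        finally show ?thesis using b12 by simp
      qed
      show ?thesis unfolding inner_Jblk using inner_diag_zero[OF J, of "blk12 X"] inner_diag_zero[OF J, of "blk21 X"] b12 b21
        by simp
    qed
    have e3: "0 \<le> X \<bullet> Q"
      unfolding inner_mat using NN Q
      by (auto simp: entrywise_nonneg_def X_def N_def intro!: sum_nonneg mult_nonneg_nonneg)
    show ?thesis using e1 e2 e3 by linarith
  qed
  have "Fm A B C D P Pm \<bullet> H = block (P ** A + transpose A ** P) (P ** B) (transpose B ** P) 0 \<bullet> H
       + (transpose (block C D 0 (mat 1)) ** Pm ** block C D 0 (mat 1)) \<bullet> H"
    by (simp add: Fm_def inner_add_left)
  thus False using neg p1 p2 by linarith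
qed

lemma qpsd_add: "qpsd S \<Longrightarrow> qpsd S' \<Longrightarrow> qpsd (S + S')"
  by (simp add: qpsd_def matrix_vector_mult_add_rdistrib inner_add_right add_nonneg_nonneg)

lemma qpsd_scale: "qpsd S \<Longrightarrow> 0 \<le> k \<Longrightarrow> qpsd (k *\<^sub>R S)"
  by (simp add: qpsd_def scaleR_matrix_vector_assoc[symmetric])

lemma entry_sym_nonneg:
  fixes e :: "real^'a::finite^'a"
  assumes "\<And>a b. 0 \<le> e$a$b"
  shows "entrywise_nonneg (e + transpose e)"
  unfolding entrywise_nonneg_def
proof (intro allI)
  fix a b
  have "(e + transpose e)$a$b = e$a$b + e$b$a" unfolding transpose_def by simp
  thus "0 \<le> (e + transpose e)$a$b" using assms[of a b] assms[of b a] by simp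
qed

lemma qpsd_zero: "qpsd 0"
  by (simp add: qpsd_def)

lemma not_primal_imp_dual:
  fixes A :: "real^'n::finite^'n" and B :: "real^'m::finite^'n" and C :: "real^'n^'m" and D :: "real^'m^'m"
  assumes np: "\<not> primal_LMI_feasible A B C D"
  shows "dual_LMI_feasible A B C D"
proof -
  let ?F = "Fm A B C D"
  define S :: "((real^'n^'n) \<times> (real^('n + 'm)^('n + 'm))) set" where
    "S = {(P - S1 - mat 1, - ?F P Pm - S2 - mat 1) | P Pm S1 S2.
            transpose P = P \<and> Pm \<in> Pi_NN \<and> qpsd S1 \<and> qpsd S2}"
  have cvx: "convex S"
    unfolding convex_def
  proof (intro ballI allI impI)
    fix x y :: "(real^'n^'n) \<times> (real^('n + 'm)^('n + 'm))" and u v :: real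
    assume x: "x \<in> S" and y: "y \<in> S" and uv: "0 \<le> u" "0 \<le> v" "u + v = 1"
    obtain P Pm S1 S2 where xe: "x = (P - S1 - mat 1, - ?F P Pm - S2 - mat 1)"
      and c: "transpose P = P" "Pm \<in> Pi_NN" "qpsd S1" "qpsd S2"
      using x unfolding S_def by blast
    obtain P' Pm' S1' S2' where ye: "y = (P' - S1' - mat 1, - ?F P' Pm' - S2' - mat 1)"
      and c': "transpose P' = P'" "Pm' \<in> Pi_NN" "qpsd S1'" "qpsd S2'"
      using y unfolding S_def by blast
    have v: "v = 1 - u" using uv by simp
    have F: "?F (u *\<^sub>R P + v *\<^sub>R P') (u *\<^sub>R Pm + v *\<^sub>R Pm') = u *\<^sub>R ?F P Pm + v *\<^sub>R ?F P' Pm'"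
      by (simp add: Fm_add Fm_scale)
    have eq: "u *\<^sub>R x + v *\<^sub>R y = ((u *\<^sub>R P + v *\<^sub>R P') - (u *\<^sub>R S1 + v *\<^sub>R S1') - mat 1,
          - ?F (u *\<^sub>R P + v *\<^sub>R P') (u *\<^sub>R Pm + v *\<^sub>R Pm') - (u *\<^sub>R S2 + v *\<^sub>R S2') - mat 1)"
    proof -
      have I1: "u *\<^sub>R (mat 1::real^'n^'n) + v *\<^sub>R mat 1 = mat 1" using uv by (simp add: scaleR_add_left[symmetric])
      have I2: "u *\<^sub>R (mat 1::real^('n + 'm)^('n + 'm)) + v *\<^sub>R mat 1 = mat 1" using uv by (simp add: scaleR_add_left[symmetric])
      have "u *\<^sub>R x + v *\<^sub>R y = ((u *\<^sub>R P + v *\<^sub>R P') - (u *\<^sub>R S1 + v *\<^sub>R S1') - (u *\<^sub>R (mat 1::real^'n^'n) + v *\<^sub>R mat 1),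
          - (u *\<^sub>R ?F P Pm + v *\<^sub>R ?F P' Pm') - (u *\<^sub>R S2 + v *\<^sub>R S2') - (u *\<^sub>R (mat 1::real^('n + 'm)^('n + 'm)) + v *\<^sub>R mat 1))"
        unfolding xe ye by (simp add: algebra_simps)
      thus ?thesis unfolding I1 I2 F .
    qed
    have t1: "transpose (u *\<^sub>R P + v *\<^sub>R P') = u *\<^sub>R P + v *\<^sub>R P'"
        using c c' by (simp add: transpose_add transpose_scalar)
    have p1: "u *\<^sub>R Pm + v *\<^sub>R Pm' \<in> Pi_NN"
        using c c' uv by (intro Pi_NN_add Pi_NN_scale) auto
    have q1: "qpsd (u *\<^sub>R S1 + v *\<^sub>R S1')"
        using c c' uv by (intro qpsd_add qpsd_scale) auto
    have q2: "qpsd (u *\<^sub>R S2 + v *\<^sub>R S2')"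
        using c c' uv by (intro qpsd_add qpsd_scale) auto
    show "u *\<^sub>R x + v *\<^sub>R y \<in> S"
      unfolding S_def using eq t1 p1 q1 q2 by blast
  qed
  have notin: "0 \<notin> S"
  proof
    assume "0 \<in> S"
    then obtain P Pm S1 S2 where e: "0 = (P - S1 - mat 1, - ?F P Pm - S2 - mat 1)"
      and c: "transpose P = P" "Pm \<in> Pi_NN" "qpsd S1" "qpsd S2"
      unfolding S_def by blast
    have PS: "P = S1 + mat 1" using e by (simp add: zero_prod_def algebra_simps)
    have FS: "?F P Pm = - (S2 + mat 1)" using e by (simp add: zero_prod_def algebra_simps)
    have "pos_def P"
      unfolding pos_def_def symmetric_mat_def
    proof (intro conjI allI impI c(1))
      fix x :: "real^'n" assume "x \<noteq> 0"
      hence "0 < x \<bullet> x" by simp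
      moreover have "0 \<le> x \<bullet> (S1 *v x)" using c(3) by (simp add: qpsd_def)
      moreover have "x \<bullet> (P *v x) = x \<bullet> (S1 *v x) + x \<bullet> x" by (simp add: PS matrix_vector_mult_add_rdistrib inner_add_right)
      ultimately show "0 < x \<bullet> (P *v x)" by linarith
    qed
    moreover have "neg_def (?F P Pm)"
      unfolding neg_def_def symmetric_mat_def
    proof (intro conjI allI impI)
      show "transpose (?F P Pm) = ?F P Pm" by (rule Fm_sym[OF c(1) Pi_NN_sym[OF c(2)]])
      fix x :: "real^('n + 'm)" assume "x \<noteq> 0"
      hence "0 < x \<bullet> x" by simp
      moreover have "0 \<le> x \<bullet> (S2 *v x)" using c(4) by (simp add: qpsd_def)
      moreover have "x \<bullet> (?F P Pm *v x) = - (x \<bullet> (S2 *v x) + x \<bullet> x)"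
        by (simp add: FS neg_mv matrix_vector_mult_add_rdistrib matrix_vector_mult_diff_rdistrib inner_diff_right inner_add_right)
      ultimately show "x \<bullet> (?F P Pm *v x) < 0" by linarith
    qed
    ultimately have "primal_LMI_feasible A B C D"
      unfolding primal_LMI_feasible_def Fm_def using c(2) by blast
    thus False using np by blast
  qed
  obtain a where a0: "a \<noteq> 0" and asep: "\<And>s. s \<in> S \<Longrightarrow> 0 \<le> a \<bullet> s"
    using separating_hyperplane_set_0[OF cvx notin] by blast
  obtain a1 a2 where a: "a = (a1, a2)" by (cases a)
  have G: "0 \<le> a1 \<bullet> (P - S1) + a2 \<bullet> (- ?F P Pm - S2)"
    if c: "transpose P = P" "Pm \<in> Pi_NN" "qpsd S1" "qpsd S2" for P Pm S1 S2
  proof (rule cone_lim)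
    fix t :: real assume t: "t > 0"
    have mem: "(t *\<^sub>R P - t *\<^sub>R S1 - mat 1, - ?F (t *\<^sub>R P) (t *\<^sub>R Pm) - t *\<^sub>R S2 - mat 1) \<in> S"
    proof -
      have "transpose (t *\<^sub>R P) = t *\<^sub>R P" using c by (simp add: transpose_scalar)
      moreover have "t *\<^sub>R Pm \<in> Pi_NN" using c t by (intro Pi_NN_scale) auto
      moreover have "qpsd (t *\<^sub>R S1)" using c t by (intro qpsd_scale) auto
      moreover have "qpsd (t *\<^sub>R S2)" using c t by (intro qpsd_scale) auto
      ultimately show ?thesis unfolding S_def by blast
    qed
    have "a \<bullet> (t *\<^sub>R P - t *\<^sub>R S1 - mat 1, - ?F (t *\<^sub>R P) (t *\<^sub>R Pm) - t *\<^sub>R S2 - mat 1)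
        = t * (a1 \<bullet> (P - S1) + a2 \<bullet> (- ?F P Pm - S2)) - (a1 \<bullet> mat 1 + a2 \<bullet> mat 1)"
      by (simp add: a Fm_scale inner_diff_right inner_add_right algebra_simps)
    thus "0 \<le> t * (a1 \<bullet> (P - S1) + a2 \<bullet> (- ?F P Pm - S2)) - (a1 \<bullet> mat 1 + a2 \<bullet> mat 1)"
      using asep[OF mem] by simp
  qed
  have symZ0: "transpose (0::real^'n^'n) = 0" by (rule transpose_zero)
  have g1: "0 \<le> (- a1) \<bullet> S1" if "qpsd S1" for S1
    using G[OF symZ0 Pi_NN_zero that qpsd_zero] by (simp add: Fm_zero)
  have g2: "0 \<le> (- a2) \<bullet> S2" if "qpsd S2" for S2
    using G[OF symZ0 Pi_NN_zero qpsd_zero that] by (simp add: Fm_zero)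
  have g3: "a1 \<bullet> P = a2 \<bullet> ?F P 0" if sP: "transpose P = P" for P
  proof -
    have "0 \<le> a1 \<bullet> P - a2 \<bullet> ?F P 0"
      using G[OF sP Pi_NN_zero qpsd_zero qpsd_zero] by (simp add: inner_minus_right)
    moreover have sP': "transpose (- P) = - P" using sP by (simp add: transpose_neg)
    have "?F (- P) 0 = - ?F P 0"
      using Fm_scale[of A B C D "-1" P 0] by simp
    hence "0 \<le> - (a1 \<bullet> P) + a2 \<bullet> ?F P 0"
      using G[OF sP' Pi_NN_zero qpsd_zero qpsd_zero] by (simp add: inner_minus_right)
    ultimately show ?thesis by linarith
  qed
  have g4: "0 \<le> (- a2) \<bullet> ?F 0 Pm" if "Pm \<in> Pi_NN" for Pm
    using G[OF symZ0 that qpsd_zero qpsd_zero] by (simp add: inner_minus_right)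
  define H where "H = - a2"
  define Z where "Z = - a1"
  have Hpsd: "pos_semidef H" unfolding H_def by (rule dual_psd) (rule g2)
  have Zpsd: "pos_semidef Z" unfolding Z_def by (rule dual_psd) (rule g1)
  have symH: "transpose H = H" using Hpsd unfolding pos_semidef_def symmetric_mat_def by blast
  have symZ: "transpose Z = Z" using Zpsd unfolding pos_semidef_def symmetric_mat_def by blast
  define W where "W = A ** blk11 H + B ** transpose (blk12 H)"
  have ZW: "Z = W + transpose W"
  proof -
    define R where "R = Z - (W + transpose W)"
    have sR: "transpose R = R" by (simp add: R_def transpose_diff transpose_add symZ)
    have "Z \<bullet> P = (W + transpose W) \<bullet> P" if sP: "transpose P = P" for P
    proof -
      have "Z \<bullet> P = H \<bullet> ?F P 0" using g3[OF sP] by (simp add: Z_def H_def)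
      also have "\<dots> = ?F P 0 \<bullet> H" by (rule inner_commute)
      also have "\<dots> = (W + transpose W) \<bullet> P" unfolding Fm_P W_def by (rule LP_inner[OF symH sP])
      finally show ?thesis .
    qed
    hence "R \<bullet> R = 0" using sR by (simp add: R_def inner_diff_left)
    hence "R = 0" by simp
    thus ?thesis by (simp add: R_def)
  qed
  define N where "N = block (- C) (mat 1 - D) 0 (mat 1)"
  define X where "X = N ** H ** transpose N"
  have sX: "transpose X = X" unfolding X_def by (rule X_sym[OF symH])
  have XG: "0 \<le> X \<bullet> (Q + Jblk J)" if "diagonal_mat J" "symmetric_mat Q" "entrywise_nonneg Q" for Q J
  proof -
    have mem: "transpose E_mat ** (Q + Jblk J) ** E_mat \<in> Pi_NN"
      unfolding Pi_NN_def using that by blast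
    have "0 \<le> H \<bullet> ?F 0 (transpose E_mat ** (Q + Jblk J) ** E_mat)"
      using g4[OF mem] by (simp add: H_def)
    also have "\<dots> = X \<bullet> (Q + Jblk J)"
      unfolding Fm_Pm sandwich_inner EM X_def N_def ..
    finally show ?thesis .
  qed
  have NN: "entrywise_nonneg X"
    unfolding entrywise_nonneg_def
  proof (intro allI)
    fix i j :: "'m + 'm"
    define e :: "real^('m + 'm)^('m + 'm)" where "e = (\<chi> a b. if a = i \<and> b = j then (1::real) else 0)"
    have "0 \<le> X \<bullet> ((e + transpose e) + Jblk 0)"
    proof (rule XG)
      show "diagonal_mat (0::real^'m^'m)" by (simp add: diagonal_mat_def)
      show "symmetric_mat (e + transpose e)" unfolding symmetric_mat_def transpose_add transpose_transpose by (rule add.commute)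
      show "entrywise_nonneg (e + transpose e)"
        by (rule entry_sym_nonneg) (simp add: e_def)
    qed
    moreover have "X \<bullet> transpose e = X \<bullet> e"
    proof -
      have "X \<bullet> transpose e = transpose X \<bullet> transpose (transpose e)" by (rule inner_transpose[symmetric])
      thus ?thesis by (simp add: sX)
    qed
    ultimately have "0 \<le> 2 * (X \<bullet> e)" by (simp add: Jblk_zero inner_add_right)
    moreover have "X \<bullet> e = X $ i $ j" unfolding e_def by (rule delta_inner)
    ultimately show "0 \<le> X $ i $ j" by simp
  qed
  have dg: "(- (C ** blk12 H) + (mat 1 - D) ** blk22 H) $ k $ k = 0" for k
  proof -
    define e :: "real^'m^'m" where "e = (\<chi> a b. if a = k \<and> b = k then (1::real) else 0)"
    have de: "diagonal_mat e" "diagonal_mat (- e)" by (auto simp: diagonal_mat_def e_def)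
    have s0: "symmetric_mat (0::real^('m + 'm)^('m + 'm))" "entrywise_nonneg (0::real^('m + 'm)^('m + 'm))"
      by (simp_all add: symmetric_mat_def transpose_zero entrywise_nonneg_def)
    have b21: "blk21 X $ k $ k = blk12 X $ k $ k"
    proof -
      have "blk21 X $ k $ k = transpose X $ Inl k $ Inr k" by (simp add: blk21_def transpose_def)
      also have "\<dots> = blk12 X $ k $ k" by (simp add: sX blk12_def)
      finally show ?thesis .
    qed
    have ie: "Y \<bullet> e = Y $ k $ k" for Y :: "real^'m^'m" unfolding e_def by (rule delta_inner)
    have "0 \<le> X \<bullet> (0 + Jblk e)" by (rule XG[OF de(1) s0])
    hence p: "0 \<le> 2 * blk12 X $ k $ k" by (simp add: inner_Jblk ie b21)
    have "0 \<le> X \<bullet> (0 + Jblk (- e))" by (rule XG[OF de(2) s0])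
    hence m: "0 \<le> - 2 * blk12 X $ k $ k" by (simp add: inner_Jblk ie b21 inner_minus_right)
    have "blk12 X $ k $ k = 0" using p m by linarith
    thus ?thesis by (simp add: X_def N_def blk12_X)
  qed
  have H0: "H \<noteq> 0"
  proof
    assume "H = 0"
    hence "W = 0" by (simp add: W_def blk11_def blk12_def vec_eq_iff transpose_def matrix_matrix_mult_def)
    hence "Z = 0" using ZW by (simp add: transpose_zero)
    hence "a = 0" using \<open>H = 0\<close> by (simp add: a H_def Z_def zero_prod_def)
    thus False using a0 by simp
  qed
  show ?thesis
    unfolding dual_LMI_feasible_def
  proof (intro exI[of _ H] conjI allI H0 Hpsd)
    show "pos_semidef (A ** blk11 H + B ** transpose (blk12 H) + transpose (A ** blk11 H + B ** transpose (blk12 H)))"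
      using Zpsd ZW by (simp add: W_def)
    show "entrywise_nonneg (block (- C) (mat 1 - D) 0 (mat 1) ** H ** transpose (block (- C) (mat 1 - D) 0 (mat 1)))"
      using NN by (simp add: X_def N_def)
    fix i show "(- (C ** blk12 H) + (mat 1 - D) ** blk22 H) $ i $ i = 0" by (rule dg)
  qed
qed

theorem theorem2:
  fixes A :: "real^'n^'n" and B :: "real^'m^'n" and C :: "real^'n^'m" and D :: "real^'m^'m"
  assumes "hurwitz A" and "spec_norm D < 1"
  shows "(primal_LMI_feasible A B C D \<longrightarrow> globally_asymptotically_stable A B C D)
       \<and> (\<not> primal_LMI_feasible A B C D \<longleftrightarrow> dual_LMI_feasible A B C D)"
proof (intro conjI impI)
  assume "primal_LMI_feasible A B C D"
  thus "globally_asymptotically_stable A B C D" by (rule primal_gas[OF assms(2)])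
next
  show "\<not> primal_LMI_feasible A B C D \<longleftrightarrow> dual_LMI_feasible A B C D"
    using not_primal_imp_dual[of A B C D] dual_imp_not_primal[of A B C D] by blast
qed

end
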